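(* For $\sigma^2>0$ let $\Phi(\cdot;\sigma^2)$ denote the cumulative distribution function of $\mathcal{N}(0,\sigma^2)$. For every $\mu\ne0$ and $\nu^2,\sigma^2>0$, neither $\frac{\Phi(\mu;\sigma^2)}{\Phi(0;\nu^2)}$ nor $\frac{\Phi(0;\nu^2)}{\Phi(\mu;\sigma^2)}$ lies in the interval \[ \Big[1-\tfrac{1}{\sqrt{2\pi e}}\min\{1,|\mu|/\sigma\},\ 1+\tfrac{1}{\sqrt{2\pi e}}\min\{1,|\mu|/\sigma\}\Big]. \] *)

theory Defs
  imports "HOL-Probability.Probability"
begin

definition normal_cdf :: "real \<Rightarrow> real \<Rightarrow> real" where
  "normal_cdf x s2 = cdf (density lborel (normal_density 0 (sqrt s2))) x"

end

theory Submission
  imports Defs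
begin

lemma nd_meas:
  fixes s :: real and A :: "real set"
  assumes A: "A \<in> sets borel" and s0: "s > 0"
  shows "measure (density lborel (normal_density 0 s)) A = (LBINT x:A. normal_density 0 s x)"
proof -
  have i: "integrable lborel (\<lambda>x. normal_density 0 s x * indicator A x)"
    using A s0 by (intro integrable_real_mult_indicator integrable_normal_density) auto
  have "emeasure (density lborel (normal_density 0 s)) A = (\<integral>\<^sup>+ x. normal_density 0 s x * indicator A x \<partial>lborel)"
    using A by (subst emeasure_density) (auto intro!: nn_integral_cong split: split_indicator)
  also have "\<dots> = ennreal (integral\<^sup>L lborel (\<lambda>x. normal_density 0 s x * indicator A x))"
    using i by (intro nn_integral_eq_integral) auto
  finally show ?thesis
    unfolding measure_def set_lebesgue_integral_def
    by (simp add: mult.commute)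
qed

lemma nd_si: "A \<in> sets borel \<Longrightarrow> s > 0 \<Longrightarrow> set_integrable lborel A (normal_density 0 s)"
  unfolding set_integrable_def by (intro integrable_mult_indicator integrable_normal_density) auto

lemma nd_half:
  fixes s :: real
  assumes "s > 0"
  shows "cdf (density lborel (normal_density 0 s)) 0 = 1/2"
proof -
  let ?f = "normal_density 0 s"
  let ?M = "density lborel ?f"
  interpret prob_space ?M using prob_space_normal_density assms by blast
  have sym: "?f (-x) = ?f x" for x by (simp add: normal_density_def)
  have e1: "(LBINT x:{..0}. ?f x) = (LBINT x:{0..}. ?f x)"
    by (subst set_integral_reflect) (simp add: sym atLeast_def)
  have e0: "(LBINT x:{0}. ?f x) = 0"
  proof -
    have "(LBINT x:{0}. ?f x) = (LBINT x:{0::real}. ?f 0)"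
      by (intro set_lebesgue_integral_cong) auto
    also have "\<dots> = 0" by (subst set_integral_const) auto
    finally show ?thesis .
  qed
  have "(LBINT x:{0..}. ?f x) = (LBINT x:{0} \<union> {0<..}. ?f x)"
    by (metis ivl_disj_un_singleton(1))
  also have "\<dots> = (LBINT x:{0<..}. ?f x)"
    by (subst set_integral_Un) (auto simp: e0 nd_si assms)
  finally have e2: "(LBINT x:{0..}. ?f x) = (LBINT x:{0<..}. ?f x)" .
  have "(LBINT x:{..0} \<union> {0<..}. ?f x) = 1"
  proof -
    have "{..0} \<union> {0<..} = (UNIV :: real set)" by auto
    then show ?thesis using nd_meas[of UNIV s] prob_space assms by simp
  qed
  then have "(LBINT x:{..0}. ?f x) + (LBINT x:{0<..}. ?f x) = 1"
    by (subst (asm) set_integral_Un) (auto simp: nd_si assms)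
  then show ?thesis
    unfolding cdf_def using nd_meas[of "{..0}" s] e1 e2 assms by simp
qed

lemma nd_low:
  fixes s p q :: real
  assumes s: "s > 0" and pq: "p \<le> q" "-s \<le> p" "q \<le> s"
  shows "(q - p) * normal_density 0 s s \<le> measure (density lborel (normal_density 0 s)) {p<..q}"
proof -
  let ?f = "normal_density 0 s"
  have mono: "?f s \<le> ?f x" if "x \<in> {p<..q}" for x
  proof -
    have "x^2 \<le> s^2" using that pq by (simp add: abs_le_square_iff[symmetric] abs_le_iff)
    then show ?thesis unfolding normal_density_def using s
      by (intro mult_left_mono) (auto simp: divide_right_mono)
  qed
  have "(q - p) * ?f s = (LBINT x:{p<..q}. ?f s)"
    using pq by (subst set_integral_const) auto
  also have "\<dots> \<le> (LBINT x:{p<..q}. ?f x)"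
  proof (intro set_integral_mono mono nd_si s)
    have "integrable lborel (indicat_real {p<..q})"
      using pq(1) by (intro integrable_real_indicator) auto
    then show "set_integrable lborel {p<..q} (\<lambda>x. ?f s)"
      unfolding set_integrable_def by (intro integrable_scaleR_left)
  qed auto
  finally show ?thesis by (simp add: nd_meas s)
qed

lemma arith_final:
  fixes G c :: real
  assumes c: "0 < c" "c < 1/2" and G: "0 \<le> G" "G \<le> 1"
    and d: "G \<ge> 1/2 + c \<or> G \<le> 1/2 - c"
  shows "G / (1/2) \<notin> {1 - c .. 1 + c} \<and> (1/2) / G \<notin> {1 - c .. 1 + c}"
proof (cases "G \<ge> 1/2 + c")
  case True
  have "G > 0" using True c by linarith
  have "1 < (1 - c) * (2 * G)"
  proof -
    have "(1 - c) * (1 + 2*c) \<le> (1 - c) * (2 * G)"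
      using True c by (intro mult_left_mono) auto
    moreover have "(1 - c) * (1 + 2*c) > 1"
    proof -
      have "0 < c * (1 - 2*c)" using c by (intro mult_pos_pos) auto
      then show ?thesis by (simp add: algebra_simps)
    qed
    ultimately show ?thesis by linarith
  qed
  then have "(1/2) / G < 1 - c" using \<open>G > 0\<close> by (simp add: field_simps)
  then show ?thesis using True c by auto
next
  case False
  then have F: "G \<le> 1/2 - c" using d by auto
  show ?thesis
  proof (cases "G = 0")
    case True then show ?thesis using c by auto
  next
    case False
    then have "G > 0" using G by auto
    have "(1 + c) * (2 * G) \<le> (1 + c) * (1 - 2*c)"
      using F c by (intro mult_left_mono) auto
    moreover have "(1 + c) * (1 - 2*c) < 1"
    proof -
      have "0 < c * (1 + 2*c)" using c by (intro mult_pos_pos) auto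
      then show ?thesis by (simp add: algebra_simps)
    qed
    ultimately have "(1 + c) * (2 * G) < 1" by linarith
    then have "(1/2) / G > 1 + c" using \<open>G > 0\<close> by (simp add: field_simps)
    then show ?thesis using F c by auto
  qed
qed

theorem lemmaB2:
  fixes \<mu> \<nu>2 \<sigma>2 :: real
  assumes "\<mu> \<noteq> 0" and "\<nu>2 > 0" and "\<sigma>2 > 0"
  defines "c \<equiv> 1 / sqrt (2 * pi * exp 1) * min 1 (\<bar>\<mu>\<bar> / sqrt \<sigma>2)"
  shows "normal_cdf \<mu> \<sigma>2 / normal_cdf 0 \<nu>2 \<notin> {1 - c .. 1 + c}
       \<and> normal_cdf 0 \<nu>2 / normal_cdf \<mu> \<sigma>2 \<notin> {1 - c .. 1 + c}"
proof -
  define s where "s = sqrt \<sigma>2"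
  have s: "s > 0" using assms(3) by (simp add: s_def)
  let ?M = "density lborel (normal_density 0 s)"
  interpret P: prob_space ?M using prob_space_normal_density s by blast
  have h: "normal_cdf 0 \<nu>2 = 1/2"
    unfolding normal_cdf_def using assms(2) by (intro nd_half) auto
  define G where "G = normal_cdf \<mu> \<sigma>2"
  have GM: "G = cdf ?M \<mu>" by (simp add: G_def normal_cdf_def s_def)
  have G01: "0 \<le> G" "G \<le> 1" unfolding GM cdf_def by auto
  have h0: "cdf ?M 0 = 1/2" using nd_half s by blast
  define L where "L = min \<bar>\<mu>\<bar> s"
  have L: "0 < L" "L \<le> s" "L \<le> \<bar>\<mu>\<bar>" using s assms(1) by (auto simp: L_def)
  have se: "sqrt (exp 1) = exp (1/2::real)"
  proof -
    have "exp 1 = exp (1/2::real) ^ 2" by (simp add: power2_eq_square exp_add[symmetric])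
    then show ?thesis by simp
  qed
  have cL: "c = L * normal_density 0 s s"
  proof -
    have em: "exp (- 1 / 2::real) = 1 / exp (1/2)" by (simp add: exp_minus_inverse exp_minus field_simps)
    have sq: "sqrt (2 * pi * s\<^sup>2) = sqrt (2 * pi) * s" using s by (simp add: real_sqrt_mult)
    have ex: "- (s - 0)\<^sup>2 / (2 * s\<^sup>2) = - 1 / 2" using s by (simp add: field_simps)
    have nd: "normal_density 0 s s = 1 / (sqrt (2 * pi) * s * exp (1/2))"
      unfolding normal_density_def sq ex em by simp
    have m: "min 1 (\<bar>\<mu>\<bar> / s) = L / s" using s by (auto simp: L_def min_def field_simps)
    have c2: "c = 1 / (sqrt (2 * pi) * exp (1/2)) * (L / s)"
      unfolding c_def s_def[symmetric] m by (simp add: real_sqrt_mult se)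
    show ?thesis unfolding c2 nd using s by (simp add: field_simps)
  qed
  have cpos: "0 < c" using L s by (simp add: cL normal_density_pos)
  have chalf: "c < 1/2"
  proof -
    have "min 1 (\<bar>\<mu>\<bar> / sqrt \<sigma>2) \<le> 1" by simp
    moreover have "sqrt (2 * pi * exp 1) > 2"
    proof -
      have "2 * pi * exp 1 > 4" 
      proof -
        have "pi * exp 1 > 3 * 1" using pi_gt3 exp_gt_one[of 1] by (intro mult_strict_mono) auto
        then show ?thesis by simp
      qed
      then show ?thesis by (metis real_sqrt_four real_sqrt_less_mono)
    qed
    ultimately have "1 / sqrt (2 * pi * exp 1) < 1/2" and "min 1 (\<bar>\<mu>\<bar> / sqrt \<sigma>2) \<le> 1"
      by (auto simp: field_simps)
    moreover have "1 / sqrt (2 * pi * exp 1) * min 1 (\<bar>\<mu>\<bar> / sqrt \<sigma>2) \<le> 1 / sqrt (2 * pi * exp 1)"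
      using calculation(2) by (intro mult_left_le) auto
    ultimately show ?thesis unfolding c_def by linarith
  qed
  have d: "G \<ge> 1/2 + c \<or> G \<le> 1/2 - c"
  proof (cases "\<mu> > 0")
    case True
    have "c \<le> measure ?M {0<..L}" unfolding cL using nd_low[of s 0 L] L s by simp
    also have "\<dots> \<le> measure ?M {0<..\<mu>}" using L True by (intro P.finite_measure_mono) auto
    also have "\<dots> = G - 1/2"
    proof -
      have "{0<..\<mu>} = {..\<mu>} - {..0}" by auto
      then show ?thesis unfolding GM h0[symmetric] cdf_def using True
        by (simp add: P.finite_measure_Diff)
    qed
    finally show ?thesis by simp
  next
    case False
    then have m: "\<mu> < 0" using assms(1) by auto
    have "c \<le> measure ?M {-L<..0}" unfolding cL using nd_low[of s "-L" 0] L s by simp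
    also have "\<dots> \<le> measure ?M {\<mu><..0}" using L m by (intro P.finite_measure_mono) auto
    also have "\<dots> = 1/2 - G"
    proof -
      have "{\<mu><..0} = {..0} - {..\<mu>}" by auto
      then show ?thesis unfolding GM h0[symmetric] cdf_def using m
        by (simp add: P.finite_measure_Diff)
    qed
    finally show ?thesis by simp
  qed
  show ?thesis using arith_final[OF cpos chalf G01 d] unfolding h G_def[symmetric] .
qed

end
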